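(* Let $X=\mathbb{R}/\mathbb{Z}$ be the circle with its standard metric, and let $\mu_1=\mu_2$ be Lebesgue measure. Let $(X,T_1,\mu_1)$ be exponentially mixing for $BV$ against $L^\infty$ and let $T_2(x)=x+\alpha \bmod 1$ be the rotation by an angle $\alpha$. Let $(r_n)_n$ be a sequence of positive numbers. (1) If $n^2r_n\to0$, then $(\mu_1\times\mu_2)(\liminf_n E_{n,r_n}^{T_1,T_2})=0$. (2) If $(r_n)_n$ and $(nr_n)_n$ are decreasing and $\sum_{n=1}^\infty nr_n<\infty$, then $(\mu_1\times\mu_2)(\limsup_n E_{n,r_n}^{T_1,T_2})=0$.
   Context: $(X,T,\mu)$ is exponentially mixing for $BV$ against $L^\infty$ if there are $C,\theta>0$ such that for all $\psi$ of bounded variation, all $\varphi\in L^\infty(\mu)$ and all $n\ge0$, $\bigl|\int\psi\cdot\varphi\circ T^n\,d\mu-\int\psi\,d\mu\int\varphi\,d\mu\bigr|\le C\|\psi\|_{BV}\|\varphi\|_{L^\infty}e^{-\theta n}$. For $n\in\mathbb{N}$ and $r>0$, $E_{n,r}^{T_1,T_2}:=\{(x,y)\in X\times X : d(T_1^i x, T_2^j y)<r \text{ for some } 0\le i,j<n\}$; $E_{n,r_n}^{T_1,T_2}$ denotes this set with $r=r_n$. *)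

theory Defs
  imports "HOL-Analysis.Analysis"
begin

text \<open>The circle R/Z is represented by the fundamental domain [0,1).\<close>

definition circle :: "real set" where
  "circle = {0..<1}"

definition circle_measure :: "real measure" where
  "circle_measure = restrict_space lborel circle"

definition circle_dist :: "real \<Rightarrow> real \<Rightarrow> real" where
  "circle_dist x y = min (frac (x - y)) (1 - frac (x - y))"

definition rotation :: "real \<Rightarrow> real \<Rightarrow> real" where
  "rotation \<alpha> x = frac (x + \<alpha>)"

definition circle_var_sums :: "(real \<Rightarrow> real) \<Rightarrow> real set" where
  "circle_var_sums \<psi> =
     {(\<Sum>i<k. \<bar>\<psi> (p (Suc i)) - \<psi> (p i)\<bar>) + \<bar>\<psi> (p 0) - \<psi> (p k)\<bar> | p k.
        (\<forall>i\<le>k. p i \<in> circle) \<and> (\<forall>i<k. p i < p (Suc i))}"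

definition circle_var :: "(real \<Rightarrow> real) \<Rightarrow> real" where
  "circle_var \<psi> = Sup (circle_var_sums \<psi>)"

definition bounded_variation :: "(real \<Rightarrow> real) \<Rightarrow> bool" where
  "bounded_variation \<psi> \<longleftrightarrow> bdd_above (circle_var_sums \<psi>)"

definition bv_norm :: "(real \<Rightarrow> real) \<Rightarrow> real" where
  "bv_norm \<psi> = circle_var \<psi> + (SUP x\<in>circle. \<bar>\<psi> x\<bar>)"

text \<open>An L-infinity function is a
  measurable function phi with |phi| \<le> K almost everywhere; its L-infinity norm
  is the infimum of such K, so bounding by every such K is the same as bounding
  by the norm.\<close>
definition exp_mixing_BV_Linf :: "real measure \<Rightarrow> (real \<Rightarrow> real) \<Rightarrow> bool" where
  "exp_mixing_BV_Linf M T \<longleftrightarrow>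
     (\<exists>C \<theta>. C > 0 \<and> \<theta> > 0 \<and>
        (\<forall>\<psi> \<phi> K n. bounded_variation \<psi> \<longrightarrow> \<phi> \<in> borel_measurable M \<longrightarrow>
            (AE x in M. \<bar>\<phi> x\<bar> \<le> K) \<longrightarrow>
            \<bar>(\<integral>x. \<psi> x * \<phi> ((T ^^ n) x) \<partial>M) - (\<integral>x. \<psi> x \<partial>M) * (\<integral>x. \<phi> x \<partial>M)\<bar>
              \<le> C * bv_norm \<psi> * K * exp (- \<theta> * real n)))"

definition E_set :: "(real \<Rightarrow> real) \<Rightarrow> (real \<Rightarrow> real) \<Rightarrow> nat \<Rightarrow> real \<Rightarrow> (real \<times> real) set" where
  "E_set T1 T2 n r = {(x, y). x \<in> circle \<and> y \<in> circle \<and>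
      (\<exists>i<n. \<exists>j<n. circle_dist ((T1 ^^ i) x) ((T2 ^^ j) y) < r)}"

end

theory Submission
  imports Defs
begin

lemma space_cm[simp]: "space circle_measure = circle"
  by (simp add: circle_measure_def space_restrict_space)

lemma circle_sets[simp]: "circle \<in> sets borel"
  by (simp add: circle_def)

lemma sets_cm: "sets circle_measure = sets (restrict_space borel circle)"
  by (simp add: circle_measure_def sets_restrict_space)

lemma emeasure_cm: "A \<subseteq> circle \<Longrightarrow> emeasure circle_measure A = emeasure lborel A"
  unfolding circle_measure_def by (rule emeasure_restrict_space) auto

lemma space1_cm: "emeasure circle_measure (space circle_measure) = 1"
  by (simp add: emeasure_cm circle_def)

lemma circle1_cm[simp]: "emeasure circle_measure circle = 1"
  by (simp add: emeasure_cm circle_def)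

lemma fin_cm: "finite_measure circle_measure"
  by (rule finite_measureI) (simp add: space1_cm del: space_cm)

lemma id_borel_cm[measurable]: "(\<lambda>x. x) \<in> borel_measurable circle_measure"
  unfolding circle_measure_def
  by (rule measurable_restrict_space1) simp

lemma meas_S:
  assumes f: "f \<in> circle_measure \<rightarrow>\<^sub>M circle_measure"
  shows "{(x,y). x\<in>circle \<and> y\<in>circle \<and> \<bar>f x - y - d\<bar> < r} \<in> sets (circle_measure \<Otimes>\<^sub>M circle_measure)"
proof -
  have fb[measurable]: "f \<in> borel_measurable circle_measure"
    using measurable_compose[OF f id_borel_cm] by simp
  have "{(x,y). x\<in>circle \<and> y\<in>circle \<and> \<bar>f x - y - d\<bar> < r} =
     {p \<in> space (circle_measure \<Otimes>\<^sub>M circle_measure). \<bar>f (fst p) - snd p - d\<bar> < r}"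
    by (auto simp: space_pair_measure)
  also have "\<dots> \<in> sets (circle_measure \<Otimes>\<^sub>M circle_measure)"
    by measurable
  finally show ?thesis .
qed

lemma bound_S:
  assumes f: "f \<in> circle_measure \<rightarrow>\<^sub>M circle_measure" and r: "r \<ge> 0"
  shows "emeasure (circle_measure \<Otimes>\<^sub>M circle_measure) {(x,y). x\<in>circle \<and> y\<in>circle \<and> \<bar>f x - y - d\<bar> < r} \<le> ennreal (2*r)"
proof -
  interpret P: finite_measure circle_measure by (rule fin_cm)
  let ?S = "{(x,y). x\<in>circle \<and> y\<in>circle \<and> \<bar>f x - y - d\<bar> < r}"
  have "emeasure (circle_measure \<Otimes>\<^sub>M circle_measure) ?S = (\<integral>\<^sup>+x. emeasure circle_measure (Pair x -` ?S) \<partial>circle_measure)"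
    by (rule P.emeasure_pair_measure_alt[OF meas_S[OF f]])
  also have "\<dots> \<le> (\<integral>\<^sup>+x. ennreal (2*r) \<partial>circle_measure)"
  proof (rule nn_integral_mono)
    fix x
    have sub: "Pair x -` ?S \<subseteq> {f x - d - r<..<f x - d + r} \<inter> circle" by auto
    have "emeasure circle_measure (Pair x -` ?S) \<le> emeasure circle_measure ({f x - d - r<..<f x - d + r} \<inter> circle)"
      by (rule emeasure_mono[OF sub]) (auto simp: sets_cm sets_restrict_space_iff intro!: sets.Int)
    also have "\<dots> = emeasure lborel ({f x - d - r<..<f x - d + r} \<inter> circle)"
      by (rule emeasure_cm) auto
    also have "\<dots> \<le> emeasure lborel {f x - d - r<..<f x - d + r}"
      by (rule emeasure_mono) auto
    also have "\<dots> = ennreal (2*r)" using r by simp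
    finally show "emeasure circle_measure (Pair x -` ?S) \<le> ennreal (2*r)" .
  qed
  also have "\<dots> = ennreal (2*r)" by (simp add: space1_cm)
  finally show ?thesis .
qed


definition Gset :: "(real \<Rightarrow> real) \<Rightarrow> real \<Rightarrow> nat \<Rightarrow> real \<Rightarrow> (real \<times> real) set" where
  "Gset T1 \<alpha> n r = (if r \<le> 1 then (\<Union>t\<in>{..<n} \<times> {..<n} \<times> {-2..2::int}.
     {(x,y). x\<in>circle \<and> y\<in>circle \<and> \<bar>(T1^^fst t) x - y -
        (real (fst (snd t)) * \<alpha> - of_int (floor (real (fst (snd t)) * \<alpha>)) - of_int (snd (snd t)))\<bar> < r})
     else circle \<times> circle)"

lemma cc_sets: "circle \<times> circle \<in> sets (circle_measure \<Otimes>\<^sub>M circle_measure)"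
proof -
  have "circle \<times> circle = space (circle_measure \<Otimes>\<^sub>M circle_measure)"
    by (simp add: space_pair_measure)
  then show ?thesis by simp
qed

lemma Gset_meas:
  assumes T1: "T1 \<in> circle_measure \<rightarrow>\<^sub>M circle_measure"
  shows "Gset T1 \<alpha> n r \<in> sets (circle_measure \<Otimes>\<^sub>M circle_measure)"
  unfolding Gset_def using cc_sets
  by (auto intro!: sets.finite_UN meas_S measurable_compose_n[OF T1])

lemma Gset_bound:
  assumes T1: "T1 \<in> circle_measure \<rightarrow>\<^sub>M circle_measure" and n: "n \<ge> 1" and r: "r > 0"
  shows "emeasure (circle_measure \<Otimes>\<^sub>M circle_measure) (Gset T1 \<alpha> n r) \<le> ennreal (10 * real n ^ 2 * r)"
proof (cases "r \<le> 1")
  case True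
  let ?I = "{..<n} \<times> {..<n} \<times> {-2..2::int}"
  let ?A = "\<lambda>t. {(x,y). x\<in>circle \<and> y\<in>circle \<and> \<bar>(T1^^fst t) x - y -
        (real (fst (snd t)) * \<alpha> - of_int (floor (real (fst (snd t)) * \<alpha>)) - of_int (snd (snd t)))\<bar> < r}"
  have "emeasure (circle_measure \<Otimes>\<^sub>M circle_measure) (Gset T1 \<alpha> n r) =
        emeasure (circle_measure \<Otimes>\<^sub>M circle_measure) (\<Union>t\<in>?I. ?A t)"
    using True by (simp add: Gset_def)
  also have "\<dots> \<le> (\<Sum>t\<in>?I. emeasure (circle_measure \<Otimes>\<^sub>M circle_measure) (?A t))"
    by (rule emeasure_subadditive_finite) (auto intro!: meas_S measurable_compose_n[OF T1])
  also have "\<dots> \<le> (\<Sum>t\<in>?I. ennreal (2*r))"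
    by (rule sum_mono) (rule bound_S[OF measurable_compose_n[OF T1]], use r in simp)
  also have "\<dots> = of_nat (card ?I) * ennreal (2*r)"
    by (simp only: sum_constant)
  also have "\<dots> = ennreal (real (card ?I) * (2*r))"
    using r by (simp only: ennreal_mult ennreal_of_nat_eq_real_of_nat of_nat_0_le_iff)
  also have "card ?I = n * n * 5" by (simp add: card_cartesian_product)
  also have "real (n * n * 5) * (2*r) = 10 * real n ^ 2 * r"
    by (simp add: power2_eq_square algebra_simps)
  finally show ?thesis .
next
  case False
  interpret P: finite_measure circle_measure by (rule fin_cm)
  have "emeasure (circle_measure \<Otimes>\<^sub>M circle_measure) (Gset T1 \<alpha> n r) = 1"
  proof -
    have cs: "circle \<in> sets circle_measure" using sets.top[of circle_measure] by simp
    show ?thesis using False by (simp add: Gset_def P.emeasure_pair_measure_Times[OF cs cs])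
  qed
  also have "(1::ennreal) \<le> ennreal (10 * real n ^ 2 * r)"
  proof -
    have "1 \<le> real n ^ 2" using n by simp
    then have "1*1 \<le> real n ^ 2 * r" using False
      by (intro mult_mono) auto
    then have "1 \<le> 10 * real n ^ 2 * r" by linarith
    then show ?thesis by simp
  qed
  finally show ?thesis .
qed


lemma rot_iter:
  assumes "y \<in> circle"
  shows "(rotation \<alpha> ^^ j) y = frac (y + real j * \<alpha>)"
proof (induction j)
  case 0
  then show ?case using assms by (simp add: circle_def)
next
  case (Suc j)
  have "(rotation \<alpha> ^^ Suc j) y = rotation \<alpha> ((rotation \<alpha> ^^ j) y)"
    by simp
  also have "\<dots> = frac (frac (y + real j * \<alpha>) + \<alpha>)"
    unfolding Suc.IH by (simp add: rotation_def)
  also have "frac (y + real j * \<alpha>) + \<alpha> = (y + real (Suc j) * \<alpha>) + of_int (- floor (y + real j * \<alpha>))"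
    by (simp add: frac_def algebra_simps)
  also have "frac \<dots> = frac (y + real (Suc j) * \<alpha>)"
    by (rule frac_add_of_int_right)
  finally show ?case .
qed

lemma iter_circle:
  assumes "\<And>x. x \<in> circle \<Longrightarrow> T1 x \<in> circle" "x \<in> circle"
  shows "(T1 ^^ i) x \<in> circle"
  using assms by (induction i) auto

lemma cd_int:
  assumes a: "0 \<le> a" "a < 1" and b: "0 \<le> b" "b < 1" and d: "circle_dist a b < r"
  shows "\<exists>k::int. -1 \<le> k \<and> k \<le> 1 \<and> \<bar>a - b - of_int k\<bar> < r"
proof -
  let ?t = "a - b"
  have "floor ?t = -1 \<or> floor ?t = 0" using a b by (auto simp: floor_eq_iff)
  then show ?thesis
  proof
    assume f: "floor ?t = -1"
    then have "-1 \<le> ?t" "?t < 0" by (auto simp: floor_eq_iff)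
    have fr: "frac ?t = ?t + 1" using f by (simp add: frac_def)
    show ?thesis
    proof (cases "?t + 1 < r")
      case True then show ?thesis using \<open>-1 \<le> ?t\<close> by (intro exI[of _ "-1"]) auto
    next
      case False then have "1 - frac ?t < r" using d fr by (auto simp: circle_dist_def min_def split: if_splits)
      then show ?thesis using fr \<open>?t < 0\<close> by (intro exI[of _ 0]) auto
    qed
  next
    assume f: "floor ?t = 0"
    then have "0 \<le> ?t" "?t < 1" by (auto simp: floor_eq_iff)
    have fr: "frac ?t = ?t" using f by (simp add: frac_def)
    show ?thesis
    proof (cases "?t < r")
      case True then show ?thesis using \<open>0 \<le> ?t\<close> by (intro exI[of _ 0]) auto
    next
      case False then have "1 - frac ?t < r" using d fr by (auto simp: circle_dist_def min_def split: if_splits)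
      then show ?thesis using fr \<open>?t < 1\<close> by (intro exI[of _ 1]) auto
    qed
  qed
qed

lemma frac_shift:
  assumes "0 \<le> y" "y < 1"
  shows "\<exists>l::int. 0 \<le> l \<and> l \<le> 1 \<and> frac (y + c) = y + c - of_int (floor c) - of_int l"
proof -
  have "floor (y + c) = floor c \<or> floor (y + c) = floor c + 1"
    using assms by (auto simp: floor_eq_iff) linarith+
  then show ?thesis
    by (auto simp: frac_def intro: exI[of _ 0] exI[of _ 1])
qed

lemma circle_dist_nonneg: "circle_dist a b \<ge> 0"
  unfolding circle_dist_def using frac_lt_1[of "a - b"] by simp

lemma E_sub_G:
  assumes T1m: "\<And>x. x \<in> circle \<Longrightarrow> T1 x \<in> circle"
  shows "E_set T1 (rotation \<alpha>) n r \<subseteq> Gset T1 \<alpha> n r"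
proof
  fix p assume "p \<in> E_set T1 (rotation \<alpha>) n r"
  then obtain x y i j where p: "p = (x,y)" and xy: "x \<in> circle" "y \<in> circle" and ij: "i < n" "j < n"
    and cd: "circle_dist ((T1 ^^ i) x) ((rotation \<alpha> ^^ j) y) < r"
    unfolding E_set_def by auto
  show "p \<in> Gset T1 \<alpha> n r"
  proof (cases "r \<le> 1")
    case False then show ?thesis using p xy by (simp add: Gset_def)
  next
    case True
    let ?a = "(T1 ^^ i) x"
    have a: "?a \<in> circle" by (rule iter_circle[OF T1m xy(1)])
    have b: "(rotation \<alpha> ^^ j) y = frac (y + real j * \<alpha>)" by (rule rot_iter[OF xy(2)])
    obtain k::int where k: "-1 \<le> k" "k \<le> 1" "\<bar>?a - frac (y + real j * \<alpha>) - of_int k\<bar> < r"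
      using cd_int[of ?a "frac (y + real j * \<alpha>)" r] a cd b frac_lt_1 by (auto simp: circle_def)
    obtain l::int where l: "0 \<le> l" "l \<le> 1" "frac (y + real j * \<alpha>) = y + real j * \<alpha> - of_int (floor (real j * \<alpha>)) - of_int l"
      using frac_shift[of y "real j * \<alpha>"] xy by (auto simp: circle_def)
    have m: "l - k \<in> {-2..2}" using k l by auto
    have "\<bar>?a - y - (real j * \<alpha> - of_int (floor (real j * \<alpha>)) - of_int (l - k))\<bar> < r"
      using k(3) unfolding l(3) by (simp add: algebra_simps)
    then have A: "(x,y) \<in> (\<lambda>t. {(x,y). x\<in>circle \<and> y\<in>circle \<and> \<bar>(T1^^fst t) x - y -
        (real (fst (snd t)) * \<alpha> - of_int (floor (real (fst (snd t)) * \<alpha>)) - of_int (snd (snd t)))\<bar> < r}) (i, j, l - k)"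
      using xy by simp
    have I: "(i, j, l - k) \<in> {..<n} \<times> {..<n} \<times> {-2..2::int}" using ij m by simp
    show ?thesis unfolding Gset_def if_P[OF True] p using I A by blast
  qed
qed


lemma E_mono:
  assumes "n \<le> n'" "r \<le> r'"
  shows "E_set T1 T2 n r \<subseteq> E_set T1 T2 n' r'"
proof
  fix p assume "p \<in> E_set T1 T2 n r"
  then obtain x y i j where "p = (x,y)" "x \<in> circle" "y \<in> circle" "i < n" "j < n"
    "circle_dist ((T1 ^^ i) x) ((T2 ^^ j) y) < r" unfolding E_set_def by auto
  moreover have "\<exists>i<n'. \<exists>j<n'. circle_dist ((T1 ^^ i) x) ((T2 ^^ j) y) < r'"
    using calculation assms by (meson less_le_trans order_less_le_trans)
  ultimately show "p \<in> E_set T1 T2 n' r'" unfolding E_set_def by auto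
qed

lemma r_dec_le:
  assumes dec: "\<forall>n\<ge>1. r (Suc n) \<le> r n" and "1 \<le> a" "a \<le> m"
  shows "r m \<le> (r a :: real)"
  using assms(3) assms(2)
proof (induction m rule: dec_induct)
  case base then show ?case by simp
next
  case (step m) then show ?case using dec by (meson order_trans)
qed

theorem mainTheorem9:
  fixes T1 :: "real \<Rightarrow> real" and \<alpha> :: real and r :: "nat \<Rightarrow> real"
  assumes T1_maps: "\<And>x. x \<in> circle \<Longrightarrow> T1 x \<in> circle"
    and T1_meas: "T1 \<in> circle_measure \<rightarrow>\<^sub>M circle_measure"
    and T1_inv: "distr circle_measure circle_measure T1 = circle_measure"
    and T1_mix: "exp_mixing_BV_Linf circle_measure T1"
    and r_pos: "\<And>n. n \<ge> 1 \<Longrightarrow> r n > 0"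
  shows "((\<lambda>n. real n ^ 2 * r n) \<longlonglongrightarrow> 0 \<longrightarrow>
            emeasure (circle_measure \<Otimes>\<^sub>M circle_measure)
              (liminf (\<lambda>n. E_set T1 (rotation \<alpha>) n (r n))) = 0)
       \<and> ((\<forall>n\<ge>1. r (Suc n) \<le> r n) \<and> (\<forall>n\<ge>1. real (Suc n) * r (Suc n) \<le> real n * r n)
            \<and> summable (\<lambda>n. real n * r n) \<longrightarrow>
            emeasure (circle_measure \<Otimes>\<^sub>M circle_measure)
              (limsup (\<lambda>n. E_set T1 (rotation \<alpha>) n (r n))) = 0)"
proof (intro conjI impI)
  let ?M = "circle_measure \<Otimes>\<^sub>M circle_measure"
  let ?E = "\<lambda>n. E_set T1 (rotation \<alpha>) n (r n)"
  let ?G = "\<lambda>n. Gset T1 \<alpha> n (r n)"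
  have Gm[measurable]: "\<And>n. ?G n \<in> sets ?M" by (rule Gset_meas[OF T1_meas])
  {
    assume lim: "(\<lambda>n. real n ^ 2 * r n) \<longlonglongrightarrow> 0"
    have sub: "liminf ?E \<le> liminf ?G"
      by (rule Liminf_mono) (simp add: E_sub_G[OF T1_maps])
    have "(\<Inter>m\<in>{k..}. ?G m) \<in> null_sets ?M" for k
    proof -
      have ms: "(\<Inter>m\<in>{k..}. ?G m) \<in> sets ?M"
        by (rule sets.countable_INT') auto
      have "emeasure ?M (\<Inter>m\<in>{k..}. ?G m) \<le> 0"
      proof (rule LIMSEQ_le_const)
        have "(\<lambda>n. 10 * (real n ^ 2 * r n)) \<longlonglongrightarrow> 10 * 0"
          by (intro tendsto_mult tendsto_const lim)
        then show "(\<lambda>n. ennreal (10 * real n ^ 2 * r n)) \<longlonglongrightarrow> 0"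
          unfolding ennreal_0[symmetric] by (intro tendsto_ennrealI) (simp add: mult.assoc)
        show "\<exists>N. \<forall>n\<ge>N. emeasure ?M (\<Inter>m\<in>{k..}. ?G m) \<le> ennreal (10 * real n ^ 2 * r n)"
        proof (intro exI[of _ "max k 1"] allI impI)
          fix n assume n: "max k 1 \<le> n"
          have "emeasure ?M (\<Inter>m\<in>{k..}. ?G m) \<le> emeasure ?M (?G n)"
            by (rule emeasure_mono) (use n in auto)
          also have "\<dots> \<le> ennreal (10 * real n ^ 2 * r n)"
            by (rule Gset_bound[OF T1_meas]) (use n r_pos in auto)
          finally show "emeasure ?M (\<Inter>m\<in>{k..}. ?G m) \<le> ennreal (10 * real n ^ 2 * r n)" .
        qed
      qed
      then show ?thesis using ms by auto
    qed
    then have "(\<Union>k. \<Inter>m\<in>{k..}. ?G m) \<in> null_sets ?M" by auto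
    then have nl: "liminf ?G \<in> null_sets ?M" by (simp add: liminf_SUP_INF)
    have "emeasure ?M (liminf ?E) \<le> emeasure ?M (liminf ?G)"
      by (rule emeasure_mono[OF sub]) (auto)
    then show "emeasure ?M (liminf ?E) = 0" using nl by auto
  }
  {
    assume A: "(\<forall>n\<ge>1. r (Suc n) \<le> r n) \<and> (\<forall>n\<ge>1. real (Suc n) * r (Suc n) \<le> real n * r n)
            \<and> summable (\<lambda>n. real n * r n)"
    then have dec: "\<forall>n\<ge>1. r (Suc n) \<le> r n" and dec2: "\<forall>n\<ge>1. real (Suc n) * r (Suc n) \<le> real n * r n"
      and sm: "summable (\<lambda>n. real n * r n)" by auto
    define H where "H k = Gset T1 \<alpha> (2^(k+1)) (r (2^k))" for k
    have Hm[measurable]: "\<And>k. H k \<in> sets ?M" unfolding H_def by (rule Gset_meas[OF T1_meas])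
    define b where "b k = 40 * (2^k * (real (2^k) * r (2^k)))" for k
    have Hb: "emeasure ?M (H k) \<le> ennreal (b k)" for k
    proof -
      have "emeasure ?M (H k) \<le> ennreal (10 * real (2^(k+1)) ^ 2 * r (2^k))"
        unfolding H_def by (rule Gset_bound[OF T1_meas]) (use r_pos in auto)
      also have "10 * real (2^(k+1)) ^ 2 * r (2^k) = b k"
        by (simp add: b_def power_mult_distrib power_add power2_eq_square algebra_simps)
      finally show ?thesis .
    qed
    have cond: "summable (\<lambda>n. 2^n * (real (2^n) * r (2^n)))"
    proof -
      have "summable (\<lambda>n. real n * r n) \<longleftrightarrow> summable (\<lambda>n. 2^n * (real (2^n) * r (2^n)))"
      proof (rule condensation_test)
        fix m :: nat assume "0 < m"
        then show "real (Suc m) * r (Suc m) \<le> real m * r m" using dec2 by auto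
      next
        fix n :: nat show "0 \<le> real n * r n"
          using r_pos[of n] by (cases "n = 0") auto
      qed
      then show ?thesis using sm by simp
    qed
    then have sb: "summable b" unfolding b_def by (intro summable_mult)
    have fin: "emeasure ?M (H k) < \<infinity>" for k
      using Hb[of k] by (simp add: le_less_trans)
    have "summable (\<lambda>k. measure ?M (H k))"
    proof (rule summable_comparison_test'[OF sb])
      fix k :: nat
      have "measure ?M (H k) \<le> b k"
      proof -
        have "b k \<ge> 0" unfolding b_def using r_pos[of "2^k"] by simp
        then show ?thesis using Hb[of k] fin[of k]
          by (simp add: emeasure_eq_ennreal_measure)
      qed
      then show "norm (measure ?M (H k)) \<le> b k" by simp
    qed
    then have nl: "limsup H \<in> null_sets ?M"
      by (intro borel_cantelli_limsup1) (use fin in auto)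
    have sub: "limsup ?E \<subseteq> limsup H"
    proof
      fix p assume p: "p \<in> limsup ?E"
      have "p \<in> (\<Union>k\<in>{K..}. H k)" for K
      proof -
        from p have "p \<in> (\<Union>m\<in>{2^K..}. ?E m)" by (simp add: limsup_INF_SUP)
        then obtain m where m: "2^K \<le> m" "p \<in> ?E m" by auto
        have "m \<ge> 1" using m(1) by (meson le_trans one_le_power one_le_numeral)
        then obtain k where k: "2^k \<le> m" "m < 2^(k+1)" using ex_power_ivl1[of 2 m] by auto
        have "K \<le> k"
        proof (rule ccontr)
          assume "\<not> K \<le> k"
          then have "(2::nat)^(k+1) \<le> 2^K" by (intro power_increasing) auto
          then show False using k m by simp
        qed
        have rm: "r m \<le> r (2^k)" by (rule r_dec_le[OF dec]) (use k in auto)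
        have "?E m \<subseteq> E_set T1 (rotation \<alpha>) (2^(k+1)) (r (2^k))"
          by (rule E_mono; use k rm in auto)
        also have "\<dots> \<subseteq> H k" unfolding H_def by (rule E_sub_G[OF T1_maps])
        finally show ?thesis using m(2) \<open>K \<le> k\<close> by auto
      qed
      then show "p \<in> limsup H" by (simp add: limsup_INF_SUP)
    qed
    have "emeasure ?M (limsup ?E) \<le> emeasure ?M (limsup H)"
      by (rule emeasure_mono[OF sub]) auto
    then show "emeasure ?M (limsup ?E) = 0" using nl by auto
  }
qed

end
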